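(* Let $A\in\mathcal{M}_n$. The following are equivalent: (1) $M(A)$ is $\mathbb{Z}/2$-trivial, i.e. $H^*(M(A);\mathbb{Z}/2)\cong H^*((\mathbb{C}P^1)^n;\mathbb{Z}/2)$ as graded rings; (2) $\alpha^A_j\equiv0\pmod 2$ in $H^2(M(A);\mathbb{Z})$ for $j=1,\dots,n$; (3) every entry of $A$ is an even integer.
   Context: Let $\mathcal{M}_n$ be the set of integral strictly upper triangular $n\times n$ matrices $A=(A^i_j)$ ($A^i_j$ is the $(i,j)$ entry, and $A^i_j=0$ for $i\ge j$). For $A\in\mathcal{M}_n$, $M(A)$ denotes the Bott manifold obtained as the quotient of $(S^3)^n$ ($S^3\subset\mathbb{C}^2$ the unit sphere) by the free $(S^1)^n$-action $(g_1,\dots,g_n)\cdot((z_1,w_1),\dots,(z_n,w_n))=\big(((\prod_{k<j}g_k^{-A^k_j})g_jz_j,\ g_jw_j)\big)_{j=1}^n$. Let $x^A_j\in H^2(M(A);\mathbb{Z})$ be the first Chern class of the line bundle obtained as the quotient of $(S^3)^n\times\mathbb{C}$ where $g$ acts on the $\mathbb{C}$-factor by $g_j^{-1}$. Put $\alpha^A_j=\sum_{i<j}A^i_jx^A_i$. Then $H^*(M(A);\mathbb{Z})=\mathbb{Z}[x^A_1,\dots,x^A_n]/((x^A_j)^2-\alpha^A_jx^A_j\mid j=1,\dots,n)$, with $x^A_1,\dots,x^A_n$ a basis of $H^2(M(A);\mathbb{Z})$. *)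

theory Defs
  imports "HOL-Algebra.QuotRing" "HOL-Library.Poly_Mapping" "HOL-Library.Z2"
begin

text \<open>Polynomials in the variables x_1, ..., x_n with coefficients in a commutative ring:
  a polynomial is a finitely supported map from monomials (finitely supported exponent
  vectors nat \<Rightarrow>0 nat) to coefficients. The variable x_j is indexed by j, 1 \<le> j \<le> n.\<close>

type_synonym 'a mpoly = "(nat \<Rightarrow>\<^sub>0 nat) \<Rightarrow>\<^sub>0 'a"

definition poly_ring :: "nat \<Rightarrow> ('a::comm_ring_1) mpoly ring" where
  "poly_ring n = \<lparr>carrier = {p :: 'a mpoly. \<forall>m \<in> Poly_Mapping.keys p. Poly_Mapping.keys m \<subseteq> {1..n}},
                  mult = (*), one = 1, zero = 0, add = (+)\<rparr>"

definition var :: "nat \<Rightarrow> ('a::comm_ring_1) mpoly" where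
  "var j = Poly_Mapping.single (Poly_Mapping.single j 1) 1"

text \<open>Integral strictly upper triangular n x n matrices; A i j is the (i,j) entry, 1 \<le> i,j \<le> n.\<close>
definition strict_upper :: "nat \<Rightarrow> (nat \<Rightarrow> nat \<Rightarrow> int) \<Rightarrow> bool" where
  "strict_upper n A \<longleftrightarrow> (\<forall>i\<in>{1..n}. \<forall>j\<in>{1..n}. j \<le> i \<longrightarrow> A i j = 0)"

definition alpha :: "(nat \<Rightarrow> nat \<Rightarrow> int) \<Rightarrow> nat \<Rightarrow> ('a::comm_ring_1) mpoly" where
  "alpha A j = (\<Sum>i\<in>{1..<j}. Poly_Mapping.single 0 (of_int (A i j)) * var i)"

definition rel_ideal :: "nat \<Rightarrow> (nat \<Rightarrow> nat \<Rightarrow> int) \<Rightarrow> ('a::comm_ring_1) mpoly set" where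
  "rel_ideal n A = genideal (poly_ring n) {var j ^ 2 - alpha A j * var j | j. j \<in> {1..n}}"

text \<open>The cohomology ring of the Bott manifold M(A) with coefficients in 'a:
  'a[x_1,...,x_n] / (x_j^2 - alpha_j x_j).\<close>
definition coh :: "nat \<Rightarrow> (nat \<Rightarrow> nat \<Rightarrow> int) \<Rightarrow> ('a::comm_ring_1) mpoly set ring" where
  "coh n A = poly_ring n Quot rel_ideal n A"

text \<open>A polynomial is homogeneous of cohomological degree d (each x_j has degree 2).\<close>
definition homog :: "nat \<Rightarrow> ('a::comm_ring_1) mpoly \<Rightarrow> bool" where
  "homog d p \<longleftrightarrow> (\<forall>m \<in> Poly_Mapping.keys p. 2 * (\<Sum>i\<in>Poly_Mapping.keys m. Poly_Mapping.lookup m i) = d)"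

definition cls :: "nat \<Rightarrow> (nat \<Rightarrow> nat \<Rightarrow> int) \<Rightarrow> ('a::comm_ring_1) mpoly \<Rightarrow> 'a mpoly set" where
  "cls n A p = rel_ideal n A +>\<^bsub>poly_ring n\<^esub> p"

definition cohdeg :: "nat \<Rightarrow> (nat \<Rightarrow> nat \<Rightarrow> int) \<Rightarrow> nat \<Rightarrow> ('a::comm_ring_1) mpoly set set" where
  "cohdeg n A d = cls n A ` {p \<in> carrier (poly_ring n). homog d p}"

definition graded_ring_iso_coh ::
  "nat \<Rightarrow> (nat \<Rightarrow> nat \<Rightarrow> int) \<Rightarrow> (nat \<Rightarrow> nat \<Rightarrow> int) \<Rightarrow> (('a::comm_ring_1) mpoly set \<Rightarrow> 'a mpoly set) \<Rightarrow> bool" where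
  "graded_ring_iso_coh n A B \<phi> \<longleftrightarrow>
     \<phi> \<in> ring_iso (coh n A) (coh n B) \<and> (\<forall>d. \<phi> ` cohdeg n A d = cohdeg n B d)"

text \<open>M(A) is Z/2-trivial: H^*(M(A);Z/2) \<cong> H^*((CP^1)^n;Z/2) = H^*(M(0);Z/2) as graded rings.
  Z/2 is the type bit.\<close>
definition Z2_trivial :: "nat \<Rightarrow> (nat \<Rightarrow> nat \<Rightarrow> int) \<Rightarrow> bool" where
  "Z2_trivial n A \<longleftrightarrow>
     (\<exists>\<phi> :: bit mpoly set \<Rightarrow> bit mpoly set. graded_ring_iso_coh n A (\<lambda>_ _. 0) \<phi>)"

end

theory Submission
  imports Defs
begin

definition PC :: "nat \<Rightarrow> ('a::comm_ring_1) mpoly set" where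
 "PC n = {p. \<forall>m \<in> Poly_Mapping.keys p. Poly_Mapping.keys m \<subseteq> {1..n}}"

lemma carrier_pr: "carrier (poly_ring n) = PC n" by (simp add: poly_ring_def PC_def)
lemma pr_simps[simp]: "mult (poly_ring n) = (*)" "one (poly_ring n) = 1" "zero (poly_ring n) = 0" "add (poly_ring n) = (+)"
  by (simp_all add: poly_ring_def)

lemma keys_add_nat: "Poly_Mapping.keys ((a::nat\<Rightarrow>\<^sub>0nat) + b) = Poly_Mapping.keys a \<union> Poly_Mapping.keys b"
  by (auto simp: in_keys_iff lookup_add)

lemma PC_add: "p \<in> PC n \<Longrightarrow> q \<in> PC n \<Longrightarrow> p + q \<in> PC n"
  using keys_add[of p q] unfolding PC_def by blast
lemma PC_mult: "p \<in> PC n \<Longrightarrow> q \<in> PC n \<Longrightarrow> p * q \<in> PC n"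
proof -
  assume a: "p \<in> PC n" "q \<in> PC n"
  { fix m assume "m \<in> Poly_Mapping.keys (p*q)"
    then obtain a b where "m = a + b" "a \<in> Poly_Mapping.keys p" "b \<in> Poly_Mapping.keys q"
      using keys_mult[of p q] by blast
    hence "Poly_Mapping.keys m \<subseteq> {1..n}" using a unfolding PC_def by (auto simp: keys_add_nat) }
  thus ?thesis unfolding PC_def by blast
qed
lemma PC_uminus: "p \<in> PC n \<Longrightarrow> - p \<in> PC n"
  by (auto simp: in_keys_iff PC_def)
lemma PC_one: "1 \<in> PC n" by (simp add: PC_def)
lemma PC_zero: "0 \<in> PC n" by (simp add: PC_def)

lemma cring_pr: "cring (poly_ring n :: ('a::comm_ring_1) mpoly ring)"
proof (rule cringI)
  show "abelian_group (poly_ring n :: 'a mpoly ring)"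
    by (rule abelian_groupI) (auto simp: carrier_pr PC_add add_ac PC_zero intro!: bexI[of _ "- _"] PC_uminus)
  show "comm_monoid (poly_ring n :: 'a mpoly ring)"
    by (rule comm_monoidI) (auto simp: carrier_pr PC_mult mult_ac PC_one)
qed (auto simp: distrib_right)

lemma ainv_pr: "x \<in> carrier (poly_ring n) \<Longrightarrow> a_inv (poly_ring n) x = - (x :: ('a::comm_ring_1) mpoly)"
proof -
  interpret cring "poly_ring n :: 'a mpoly ring" by (rule cring_pr)
  assume x: "x \<in> carrier (poly_ring n)"
  show ?thesis by (rule minus_equality) (use x in \<open>auto simp: carrier_pr PC_uminus\<close>)
qed

definition tdeg :: "(nat \<Rightarrow>\<^sub>0 nat) \<Rightarrow> nat" where
  "tdeg m = (\<Sum>i\<in>Poly_Mapping.keys m. Poly_Mapping.lookup m i)"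

lemma tdeg_add: "tdeg (a + b) = tdeg a + tdeg b"
  unfolding tdeg_def by (rule setsum_keys_plus_distrib) auto

lemma tdeg_pos: "a \<noteq> 0 \<Longrightarrow> tdeg a \<ge> 1"
proof -
  assume "a \<noteq> 0"
  then obtain i where i: "i \<in> Poly_Mapping.keys a"
    by (metis keys_eq_empty ex_in_conv)
  have "Poly_Mapping.lookup a i \<le> tdeg a" unfolding tdeg_def
    by (rule member_le_sum) (use i in auto)
  moreover have "Poly_Mapping.lookup a i \<ge> 1" using i by (simp add: in_keys_iff)
  ultimately show ?thesis by simp
qed

lemma tdeg_single[simp]: "tdeg (Poly_Mapping.single i k) = k"
  by (simp add: tdeg_def)

definition Fw :: "(nat \<Rightarrow>\<^sub>0 nat) set \<Rightarrow> ((nat \<Rightarrow>\<^sub>0 nat) \<Rightarrow> 'a) \<Rightarrow> ('a::comm_ring_1) mpoly \<Rightarrow> 'a" where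
  "Fw M w p = (\<Sum>m\<in>M. w m * Poly_Mapping.lookup p m)"

lemma Fw_add: "Fw M w (p + q) = Fw M w p + Fw M w q"
  by (simp add: Fw_def lookup_add distrib_left sum.distrib)
lemma Fw_uminus: "Fw M w (- p) = - Fw M w p"
  by (simp add: Fw_def sum_negf)
lemma Fw_zero: "Fw M w 0 = 0"
  by (simp add: Fw_def)

lemma lookup_scal: "Poly_Mapping.lookup (Poly_Mapping.single 0 c * g) m = c * Poly_Mapping.lookup g m"
  by (simp flip: mult_map_scale_conv_mult add: map.rep_eq when_def)

lemma Fw_mult_homog:
  assumes M: "\<forall>m\<in>M. tdeg m \<le> 2" and g: "\<forall>m\<in>Poly_Mapping.keys g. tdeg m = 2"
    and F: "Fw M w g = 0"
  shows "Fw M w (r * g) = 0"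
proof -
  define c where "c = Poly_Mapping.lookup r 0"
  define r' where "r' = r - Poly_Mapping.single 0 c"
  have r: "r = Poly_Mapping.single 0 c + r'" by (simp add: r'_def)
  have r'0: "Poly_Mapping.lookup r' 0 = 0" by (simp add: r'_def c_def lookup_minus)
  have "Poly_Mapping.lookup (r' * g) m = 0" if "m \<in> M" for m
  proof (rule ccontr)
    assume "Poly_Mapping.lookup (r' * g) m \<noteq> 0"
    hence "m \<in> Poly_Mapping.keys (r' * g)" by (simp add: in_keys_iff)
    then obtain a b where ab: "m = a + b" "a \<in> Poly_Mapping.keys r'" "b \<in> Poly_Mapping.keys g"
      using keys_mult[of r' g] by blast
    have "a \<noteq> 0" using ab(2) r'0 by (auto simp: in_keys_iff)
    hence "tdeg m \<ge> 3" using ab g tdeg_pos[of a] by (simp add: tdeg_add)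
    thus False using M that by auto
  qed
  hence "Fw M w (r' * g) = 0" by (simp add: Fw_def)
  moreover have "Fw M w (Poly_Mapping.single 0 c * g) = c * Fw M w g"
    unfolding Fw_def lookup_scal sum_distrib_left by (simp add: mult_ac)
  ultimately show ?thesis using F by (simp add: r distrib_right Fw_add)
qed

lemma ideal_kill:
  fixes S :: "('a::comm_ring_1) mpoly set"
  assumes S: "S \<subseteq> carrier (poly_ring n)"
    and M: "\<forall>m\<in>M. tdeg m \<le> 2" and g: "\<forall>s\<in>S. \<forall>m\<in>Poly_Mapping.keys s. tdeg m = 2"
    and F: "\<forall>s\<in>S. Fw M w s = 0"
    and p: "p \<in> genideal (poly_ring n) S"
  shows "Fw M w p = 0"
proof -
  interpret cring "poly_ring n :: 'a mpoly ring" by (rule cring_pr)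
  define K where "K = {p \<in> carrier (poly_ring n). \<forall>r\<in>carrier (poly_ring n). Fw M w (r * p) = (0::'a)}"
  have "ideal K (poly_ring n)"
  proof (rule idealI)
    show "ring (poly_ring n :: 'a mpoly ring)" by (rule ring_axioms)
    show "subgroup K (add_monoid (poly_ring n))"
    proof (rule group.subgroupI[OF a_group])
      show "K \<subseteq> carrier (add_monoid (poly_ring n))" by (auto simp: K_def)
      show "K \<noteq> {}" using zero_closed by (auto simp: K_def Fw_zero intro!: exI[of _ 0])
      fix a assume a: "a \<in> K"
      hence ac: "a \<in> carrier (poly_ring n)" by (simp add: K_def)
      have "inv\<^bsub>add_monoid (poly_ring n)\<^esub> a = - a" using ainv_pr[OF ac] by (simp add: a_inv_def)
      thus "inv\<^bsub>add_monoid (poly_ring n)\<^esub> a \<in> K" using a ac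
        by (auto simp: K_def carrier_pr PC_uminus Fw_uminus)
    next
      fix a b assume "a \<in> K" "b \<in> K"
      thus "a \<otimes>\<^bsub>add_monoid (poly_ring n)\<^esub> b \<in> K"
        by (auto simp: K_def carrier_pr PC_add Fw_add distrib_left)
    qed
  next
    fix a x :: "'a mpoly" assume "a \<in> K" "x \<in> carrier (poly_ring n)"
    thus "x \<otimes>\<^bsub>poly_ring n\<^esub> a \<in> K"
      by (auto simp: K_def carrier_pr PC_mult mult.assoc[symmetric] PC_mult)
  next
    fix a x :: "'a mpoly" assume "a \<in> K" "x \<in> carrier (poly_ring n)"
    thus "a \<otimes>\<^bsub>poly_ring n\<^esub> x \<in> K"
      by (auto simp: K_def carrier_pr PC_mult) (metis PC_mult mult.assoc mult.commute)
  qed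
  moreover have "S \<subseteq> K"
    using S g F M by (auto simp: K_def intro!: Fw_mult_homog)
  ultimately have "genideal (poly_ring n) S \<subseteq> K" by (rule genideal_minimal)
  with p have "p \<in> K" by blast
  thus ?thesis unfolding K_def using one_closed by force
qed

abbreviation mon :: "nat \<Rightarrow> (nat \<Rightarrow>\<^sub>0 nat)" where "mon i \<equiv> Poly_Mapping.single i 1"

lemma alpha_eq: "alpha A j = (\<Sum>i\<in>{1..<j}. Poly_Mapping.single (mon i) (of_int (A i j)))"
  by (simp add: alpha_def var_def mult_single del: single_of_int)

lemma var_sq: "var j ^ 2 = Poly_Mapping.single (Poly_Mapping.single j 2) (1::'a::comm_ring_1)"
proof -
  have "mon j + mon j = Poly_Mapping.single j (2::nat)" by (metis one_add_one single_add)
  thus ?thesis by (simp add: var_def power2_eq_square mult_single)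
qed

lemma alpha_var: "alpha A j * var j = (\<Sum>i\<in>{1..<j}. Poly_Mapping.single (mon i + mon j) (of_int (A i j) :: 'a::comm_ring_1))"
  by (simp add: alpha_eq var_def sum_distrib_right mult_single)

lemma mon2_eq: "l < k \<Longrightarrow> i < j \<Longrightarrow> (mon l + mon k = mon i + mon j) \<longleftrightarrow> (l = i \<and> k = j)"
proof
  assume lk: "l < k" "i < j" and e: "mon l + mon k = mon i + mon j"
  have a: "Poly_Mapping.lookup (mon l + mon k) x = Poly_Mapping.lookup (mon i + mon j) x" for x
    using e by simp
  from a[of l] a[of k] lk show "l = i \<and> k = j"
    by (auto simp: lookup_add lookup_single when_def split: if_splits)
qed auto

lemma mon2_ne_sq: "l \<noteq> k \<Longrightarrow> mon l + mon k \<noteq> Poly_Mapping.single j 2"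
proof
  assume lk: "l \<noteq> k" and e: "mon l + mon k = Poly_Mapping.single j 2"
  have a: "Poly_Mapping.lookup (mon l + mon k) x = Poly_Mapping.lookup (Poly_Mapping.single j (2::nat)) x" for x
    using e by simp
  from a[of l] a[of k] lk show False
    by (auto simp: lookup_add lookup_single when_def split: if_splits)
qed

lemma tdeg_mon2: "tdeg (mon i + mon j) = 2" by (simp add: tdeg_add)

lemma sq_inj: "Poly_Mapping.single k (2::nat) = Poly_Mapping.single j 2 \<Longrightarrow> k = j"
  by (metis lookup_single_eq lookup_single_not_eq zero_neq_numeral)

definition gen :: "(nat \<Rightarrow> nat \<Rightarrow> int) \<Rightarrow> nat \<Rightarrow> ('a::comm_ring_1) mpoly" where
  "gen A j = var j ^ 2 - alpha A j * var j"

lemma rel_ideal_gen: "rel_ideal n A = genideal (poly_ring n) (gen A ` {1..n})"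
  unfolding rel_ideal_def gen_def by (rule arg_cong[where f="genideal _"]) auto

lemma keys_alpha_var: "Poly_Mapping.keys (alpha A j * var j :: 'a::comm_ring_1 mpoly) \<subseteq> (\<lambda>i. mon i + mon j) ` {1..<j}"
  unfolding alpha_var using keys_sum by (fastforce split: if_splits)

lemma keys_alpha: "Poly_Mapping.keys (alpha A j :: 'a::comm_ring_1 mpoly) \<subseteq> mon ` {1..<j}"
  unfolding alpha_eq using keys_sum by (fastforce split: if_splits)

lemma keys_gen: "Poly_Mapping.keys (gen A j :: 'a::comm_ring_1 mpoly) \<subseteq> insert (Poly_Mapping.single j 2) ((\<lambda>i. mon i + mon j) ` {1..<j})"
proof -
  have "Poly_Mapping.keys (gen A j :: 'a mpoly) \<subseteq> Poly_Mapping.keys (var j ^ 2 :: 'a mpoly) \<union> Poly_Mapping.keys (- (alpha A j * var j) :: 'a mpoly)"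
    unfolding gen_def using keys_add[of "var j ^ 2 :: 'a mpoly" "- (alpha A j * var j)"] by simp
  also have "Poly_Mapping.keys (- (alpha A j * var j) :: 'a mpoly) = Poly_Mapping.keys (alpha A j * var j :: 'a mpoly)"
    by (auto simp: in_keys_iff)
  finally show ?thesis using keys_alpha_var[of A j] by (auto simp: var_sq)
qed

lemma gen_homog: "\<forall>m\<in>Poly_Mapping.keys (gen A j :: 'a::comm_ring_1 mpoly). tdeg m = 2"
proof
  fix m assume "m \<in> Poly_Mapping.keys (gen A j :: 'a mpoly)"
  with keys_gen[of A j] have "m = Poly_Mapping.single j 2 \<or> (\<exists>i. m = mon i + mon j)" by blast
  thus "tdeg m = 2" using tdeg_mon2 by auto
qed

lemma var_PC: "j \<in> {1..n} \<Longrightarrow> var j \<in> PC n"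
  by (simp add: var_def PC_def)

lemma alpha_PC: "j \<le> n \<Longrightarrow> alpha A j \<in> PC n"
  using keys_alpha[of A j] by (fastforce simp: PC_def)

lemma gen_PC: "j \<in> {1..n} \<Longrightarrow> gen A j \<in> PC n"
  unfolding gen_def diff_conv_add_uminus power2_eq_square
  by (intro PC_add PC_uminus PC_mult var_PC alpha_PC) auto

lemma lookup_gen_sq: "Poly_Mapping.lookup (gen A k :: 'a::comm_ring_1 mpoly) (Poly_Mapping.single j 2) = (if k = j then 1 else 0)"
proof -
  have "Poly_Mapping.lookup (alpha A k * var k :: 'a mpoly) (Poly_Mapping.single j 2) = 0"
    unfolding alpha_var lookup_sum
    by (rule sum.neutral) (use mon2_ne_sq in \<open>auto simp: lookup_single when_def\<close>)
  moreover have "Poly_Mapping.lookup (var k ^ 2 :: 'a mpoly) (Poly_Mapping.single j 2) = (if k = j then 1 else 0)"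
    by (auto simp: var_sq lookup_single when_def dest: sq_inj)
  ultimately show ?thesis by (simp add: gen_def lookup_minus)
qed

lemma lookup_gen_mix:
  assumes "i < j"
  shows "Poly_Mapping.lookup (gen A k :: 'a::comm_ring_1 mpoly) (mon i + mon j) = (if k = j \<and> 1 \<le> i then - of_int (A i j) else 0)"
proof -
  have ne: "Poly_Mapping.single k 2 \<noteq> mon i + mon j" using mon2_ne_sq[of i j k] assms by auto
  have "Poly_Mapping.lookup (alpha A k * var k :: 'a mpoly) (mon i + mon j) =
        (\<Sum>l\<in>{1..<k}. if l = i \<and> k = j then of_int (A i j) else 0)"
    unfolding alpha_var lookup_sum
    by (rule sum.cong) (use assms mon2_eq in \<open>auto simp: lookup_single\<close>)
  also have "\<dots> = (if k = j \<and> 1 \<le> i then of_int (A i j) else 0)"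
    using assms by (auto simp: sum.delta')
  finally show ?thesis using ne by (simp add: gen_def var_sq lookup_minus lookup_single)
qed

lemma gens_carrier: "gen A ` {1..n} \<subseteq> carrier (poly_ring n :: ('a::comm_ring_1) mpoly ring)"
  unfolding carrier_pr by (rule subsetI, erule imageE) (metis gen_PC)

lemma ideal_rel: "ideal (rel_ideal n A) (poly_ring n :: ('a::comm_ring_1) mpoly ring)"
proof -
  interpret cring "poly_ring n :: 'a mpoly ring" by (rule cring_pr)
  show ?thesis unfolding rel_ideal_gen by (rule genideal_ideal[OF gens_carrier])
qed

lemma gen_in_rel: "k \<in> {1..n} \<Longrightarrow> gen A k \<in> (rel_ideal n A :: ('a::comm_ring_1) mpoly set)"
proof -
  interpret cring "poly_ring n :: 'a mpoly ring" by (rule cring_pr)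
  assume "k \<in> {1..n}"
  thus ?thesis unfolding rel_ideal_gen using genideal_self[OF gens_carrier] by blast
qed

lemma kill_deg1:
  assumes "p \<in> (rel_ideal n A :: ('a::comm_ring_1) mpoly set)"
  shows "Poly_Mapping.lookup p (mon i) = 0"
proof -
  have "Fw {mon i} (\<lambda>_. 1) p = 0"
  proof (rule ideal_kill[OF gens_carrier])
    show "\<forall>s\<in>gen A ` {1..n}. \<forall>m\<in>Poly_Mapping.keys s. tdeg m = 2" using gen_homog by blast
    show "\<forall>s\<in>gen A ` {1..n}. Fw {mon i} (\<lambda>_. 1) s = (0::'a)"
    proof
      fix s :: "'a mpoly" assume "s \<in> gen A ` {1..n}"
      then obtain k where s: "s = gen A k" by blast
      have "mon i \<notin> Poly_Mapping.keys s" using gen_homog[of A k] s by fastforce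
      thus "Fw {mon i} (\<lambda>_. 1) s = (0::'a)" by (simp add: Fw_def in_keys_iff)
    qed
    show "p \<in> genideal (poly_ring n) (gen A ` {1..n})" using assms by (simp add: rel_ideal_gen)
  qed auto
  thus ?thesis by (simp add: Fw_def)
qed

lemma kill_mix:
  assumes "p \<in> (rel_ideal n A :: ('a::comm_ring_1) mpoly set)" and ij: "1 \<le> i" "i < j"
  shows "Poly_Mapping.lookup p (mon i + mon j) + of_int (A i j) * Poly_Mapping.lookup p (Poly_Mapping.single j 2) = 0"
proof -
  define w :: "(nat \<Rightarrow>\<^sub>0 nat) \<Rightarrow> 'a" where "w = (\<lambda>m. if m = Poly_Mapping.single j 2 then of_int (A i j) else (1::'a))"
  have ne: "mon i + mon j \<noteq> Poly_Mapping.single j 2" using mon2_ne_sq ij by auto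
  have Fq: "Fw {mon i + mon j, Poly_Mapping.single j 2} w q =
     Poly_Mapping.lookup q (mon i + mon j) + of_int (A i j) * Poly_Mapping.lookup q (Poly_Mapping.single j 2)" for q
    using ne by (simp add: Fw_def w_def)
  have "Fw {mon i + mon j, Poly_Mapping.single j 2} w p = 0"
  proof (rule ideal_kill[OF gens_carrier])
    show "\<forall>s\<in>gen A ` {1..n}. \<forall>m\<in>Poly_Mapping.keys s. tdeg m = 2" using gen_homog by blast
    show "\<forall>s\<in>gen A ` {1..n}. Fw {mon i + mon j, Poly_Mapping.single j 2} w s = 0"
    proof
      fix s :: "'a mpoly" assume "s \<in> gen A ` {1..n}"
      then obtain k where s: "s = gen A k" by blast
      show "Fw {mon i + mon j, Poly_Mapping.single j 2} w s = 0"
        unfolding Fq s lookup_gen_mix[OF ij(2)] lookup_gen_sq using ij by auto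
    qed
    show "p \<in> genideal (poly_ring n) (gen A ` {1..n})" using assms by (simp add: rel_ideal_gen)
  qed (auto simp: tdeg_add)
  thus ?thesis using Fq by simp
qed

lemma even_of_int_bit: "((of_int k :: bit) = 0) \<longleftrightarrow> even k"
proof
  assume "(of_int k :: bit) = 0"
  show "even k"
  proof (rule ccontr)
    assume "odd k"
    then obtain m where "k = 2 * m + 1" by (metis oddE)
    hence "(of_int k :: bit) = 1" by simp
    with \<open>(of_int k :: bit) = 0\<close> show False by simp
  qed
next
  assume "even k"
  then obtain m where "k = 2 * m" by blast
  thus "(of_int k :: bit) = 0" by simp
qed

lemma coh_facts:
  fixes A and n and p q :: "'a::comm_ring_1 mpoly"
  assumes p: "p \<in> carrier (poly_ring n)" and q: "q \<in> carrier (poly_ring n)"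
  shows "cls n A p \<oplus>\<^bsub>coh n A\<^esub> cls n A q = cls n A (p + q)"
    and "cls n A p \<otimes>\<^bsub>coh n A\<^esub> cls n A q = cls n A (p * q)"
    and "cls n A p = cls n A q \<longleftrightarrow> p - q \<in> rel_ideal n A"
    and "cls n A p = \<zero>\<^bsub>coh n A\<^esub> \<longleftrightarrow> p \<in> rel_ideal n A"
    and "cls n A p \<in> carrier (coh n A)"
proof -
  interpret cring "poly_ring n :: 'a mpoly ring" by (rule cring_pr)
  interpret ideal "rel_ideal n A :: 'a mpoly set" "poly_ring n" by (rule ideal_rel)
  show "cls n A p \<oplus>\<^bsub>coh n A\<^esub> cls n A q = cls n A (p + q)"
    using a_rcos_sum[OF p q] by (simp add: coh_def cls_def FactRing_def)
  show "cls n A p \<otimes>\<^bsub>coh n A\<^esub> cls n A q = cls n A (p * q)"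
    using rcoset_mult_add[OF p q] by (simp add: coh_def cls_def FactRing_def)
  have "p \<ominus>\<^bsub>poly_ring n\<^esub> q = p - q" using ainv_pr[OF q] by (simp add: a_minus_def)
  thus "cls n A p = cls n A q \<longleftrightarrow> p - q \<in> rel_ideal n A"
    using quotient_eq_iff_same_a_r_cos[OF ideal_rel p q] by (simp add: cls_def)
  show "cls n A p = \<zero>\<^bsub>coh n A\<^esub> \<longleftrightarrow> p \<in> rel_ideal n A"
    using rcos_const_imp_mem[OF p] a_rcos_zero[OF ideal_rel, of p]
    by (auto simp: coh_def cls_def FactRing_def)
  show "cls n A p \<in> carrier (coh n A)"
    unfolding coh_def cls_def FactRing_def A_RCOSETS_defs a_r_coset_def using p by auto
qed

lemma ring_coh: "ring (coh n A :: ('a::comm_ring_1) mpoly set ring)"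
proof -
  interpret cring "poly_ring n :: 'a mpoly ring" by (rule cring_pr)
  interpret ideal "rel_ideal n A :: 'a mpoly set" "poly_ring n" by (rule ideal_rel)
  show ?thesis unfolding coh_def by (rule quotient_is_ring)
qed

lemma homog2_iff: "homog 2 p \<longleftrightarrow> (\<forall>m\<in>Poly_Mapping.keys p. tdeg m = 1)"
  by (auto simp: homog_def tdeg_def)

lemma tdeg1: "tdeg m = 1 \<Longrightarrow> \<exists>k. m = mon k"
proof -
  assume t: "tdeg m = 1"
  hence "m \<noteq> 0" by (auto simp: tdeg_def)
  then obtain k where k: "k \<in> Poly_Mapping.keys m" by (metis keys_eq_empty ex_in_conv)
  have le: "Poly_Mapping.lookup m x \<le> 1" for x
  proof (cases "x \<in> Poly_Mapping.keys m")
    case True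
    have "Poly_Mapping.lookup m x \<le> tdeg m" unfolding tdeg_def by (rule member_le_sum) (use True in auto)
    thus ?thesis using t by simp
  qed (simp add: in_keys_iff)
  have mk: "Poly_Mapping.lookup m k = 1" using le[of k] k by (simp add: in_keys_iff)
  have other: "Poly_Mapping.lookup m x = 0" if "x \<noteq> k" for x
  proof (rule ccontr)
    assume "Poly_Mapping.lookup m x \<noteq> 0"
    hence x: "x \<in> Poly_Mapping.keys m" by (simp add: in_keys_iff)
    have "(\<Sum>i\<in>{k,x}. Poly_Mapping.lookup m i) \<le> tdeg m" unfolding tdeg_def
      by (rule sum_mono2) (use k x in auto)
    moreover have "(\<Sum>i\<in>{k,x}. Poly_Mapping.lookup m i) \<ge> 2" using that mk \<open>Poly_Mapping.lookup m x \<noteq> 0\<close> by simp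
    ultimately show False using t by simp
  qed
  have "m = mon k" by (rule poly_mapping_eqI) (use mk other in \<open>auto simp: lookup_single when_def\<close>)
  thus ?thesis by blast
qed

lemma pm_decomp: "p = (\<Sum>m\<in>Poly_Mapping.keys p. Poly_Mapping.single m (Poly_Mapping.lookup p m))"
proof (rule poly_mapping_eqI)
  fix k
  show "Poly_Mapping.lookup p k = Poly_Mapping.lookup (\<Sum>m\<in>Poly_Mapping.keys p. Poly_Mapping.single m (Poly_Mapping.lookup p m)) k"
    by (simp add: lookup_sum lookup_single when_def in_keys_iff)
qed

lemma bit_double: "(x :: bit mpoly) + x = 0"
proof (rule poly_mapping_eqI)
  fix k
  have "\<And>b::bit. b + b = 0" by (metis add_bit_eq_xor xor_self_eq)
  thus "Poly_Mapping.lookup (x + x) k = Poly_Mapping.lookup 0 k" by (simp only: lookup_add lookup_zero)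
qed

lemma bit_sq_sum: "finite S \<Longrightarrow> (\<Sum>m\<in>S. f m :: bit mpoly) * (\<Sum>m\<in>S. f m) = (\<Sum>m\<in>S. f m * f m)"
proof (induction S rule: finite_induct)
  case (insert a S)
  have "(f a + sum f S) * (f a + sum f S) = f a * f a + sum f S * sum f S + (f a * sum f S + f a * sum f S)"
    by (simp add: algebra_simps)
  thus ?case using insert by (simp add: bit_double)
qed simp

lemma mon_inj: "mon l = mon i \<Longrightarrow> l = i"
  by (metis lookup_single_eq lookup_single_not_eq zero_neq_one)
lemma mon_eq_iff[simp]: "mon l = mon i \<longleftrightarrow> l = i"
  using mon_inj by blast
lemma mon_eq_iff'[simp]: "Poly_Mapping.single l (Suc 0) = Poly_Mapping.single i (Suc 0) \<longleftrightarrow> l = i"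
  by (metis lookup_single_eq lookup_single_not_eq zero_neq_one One_nat_def)

lemma lookup_alpha: "1 \<le> i \<Longrightarrow> i < j \<Longrightarrow> Poly_Mapping.lookup (alpha A j :: 'a::comm_ring_1 mpoly) (mon i) = of_int (A i j)"
proof -
  assume ij: "1 \<le> i" "i < j"
  have "Poly_Mapping.lookup (alpha A j :: 'a mpoly) (mon i) = (\<Sum>l\<in>{1..<j}. if l = i then of_int (A i j) else 0)"
    unfolding alpha_eq lookup_sum by (rule sum.cong) (auto simp: lookup_single when_def dest: mon_inj)
  thus ?thesis using ij by simp
qed

lemma dir23:
  assumes su: "strict_upper n A"
  shows "(\<forall>j\<in>{1..n}. \<exists>y \<in> cohdeg n A 2. cls n A (alpha A j :: int mpoly) = y \<oplus>\<^bsub>coh n A\<^esub> y)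
           \<longleftrightarrow> (\<forall>i\<in>{1..n}. \<forall>j\<in>{1..n}. even (A i j))"
proof
  assume H: "\<forall>j\<in>{1..n}. \<exists>y \<in> cohdeg n A 2. cls n A (alpha A j :: int mpoly) = y \<oplus>\<^bsub>coh n A\<^esub> y"
  show "\<forall>i\<in>{1..n}. \<forall>j\<in>{1..n}. even (A i j)"
  proof (intro ballI)
    fix i j assume i: "i \<in> {1..n}" and j: "j \<in> {1..n}"
    show "even (A i j)"
    proof (cases "j \<le> i")
      case True thus ?thesis using su i j by (simp add: strict_upper_def)
    next
      case False
      from H j obtain y where y: "y \<in> cohdeg n A 2" "cls n A (alpha A j :: int mpoly) = y \<oplus>\<^bsub>coh n A\<^esub> y" by blast
      from y(1) obtain p :: "int mpoly" where p: "p \<in> carrier (poly_ring n)" "y = cls n A p"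
        by (auto simp: cohdeg_def)
      have ac: "(alpha A j :: int mpoly) \<in> carrier (poly_ring n)" using j unfolding carrier_pr by (intro alpha_PC) simp
      have pp: "p + p \<in> carrier (poly_ring n)" using p(1) by (metis PC_add carrier_pr)
      have "cls n A (alpha A j :: int mpoly) = cls n A (p + p)" using y(2) p coh_facts(1)[OF p(1) p(1)] by simp
      hence "alpha A j - (p + p) \<in> rel_ideal n A" using coh_facts(3)[OF ac pp] by simp
      hence "Poly_Mapping.lookup (alpha A j - (p + p)) (mon i) = 0" by (rule kill_deg1)
      moreover have "Poly_Mapping.lookup (alpha A j - (p + p)) (mon i) = Poly_Mapping.lookup (alpha A j) (mon i) - (Poly_Mapping.lookup p (mon i) + Poly_Mapping.lookup p (mon i))"
        by (simp only: lookup_minus lookup_add)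
      ultimately have "A i j = Poly_Mapping.lookup p (mon i) + Poly_Mapping.lookup p (mon i)"
        using lookup_alpha[of i j A, where 'a=int] i False by simp
      thus ?thesis by simp
    qed
  qed
next
  assume E: "\<forall>i\<in>{1..n}. \<forall>j\<in>{1..n}. even (A i j)"
  show "\<forall>j\<in>{1..n}. \<exists>y \<in> cohdeg n A 2. cls n A (alpha A j :: int mpoly) = y \<oplus>\<^bsub>coh n A\<^esub> y"
  proof
    fix j assume j: "j \<in> {1..n}"
    define p :: "int mpoly" where "p = (\<Sum>i\<in>{1..<j}. Poly_Mapping.single (mon i) (A i j div 2))"
    have kp: "Poly_Mapping.keys p \<subseteq> mon ` {1..<j}" unfolding p_def using keys_sum by (fastforce split: if_splits)
    have pc: "p \<in> carrier (poly_ring n)" using kp j by (fastforce simp: carrier_pr PC_def)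
    have ph: "homog 2 p" unfolding homog2_iff using kp by auto
    have "(alpha A j :: int mpoly) = p + p"
      unfolding alpha_eq p_def sum.distrib[symmetric]
    proof (rule sum.cong[OF refl])
      fix i assume "i \<in> {1..<j}"
      hence "even (A i j)" using E j by auto
      thus "Poly_Mapping.single (mon i) (of_int (A i j)) = Poly_Mapping.single (mon i) (A i j div 2) + Poly_Mapping.single (mon i) (A i j div 2)"
        by (simp flip: single_add)
    qed
    hence "cls n A (alpha A j :: int mpoly) = cls n A p \<oplus>\<^bsub>coh n A\<^esub> cls n A p"
      using coh_facts(1)[OF pc pc] by simp
    moreover have "cls n A p \<in> cohdeg n A 2" using pc ph by (auto simp: cohdeg_def)
    ultimately show "\<exists>y \<in> cohdeg n A 2. cls n A (alpha A j :: int mpoly) = y \<oplus>\<^bsub>coh n A\<^esub> y" by blast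
  qed
qed

lemma alpha_zero: "(alpha (\<lambda>_ _. 0) j :: 'a::comm_ring_1 mpoly) = 0"
  by (simp add: alpha_eq)

lemma sq_in_rel0:
  assumes p: "(p :: bit mpoly) \<in> carrier (poly_ring n)" and h: "homog 2 p"
  shows "p * p \<in> rel_ideal n (\<lambda>_ _. 0)"
proof -
  interpret cring "poly_ring n :: bit mpoly ring" by (rule cring_pr)
  interpret ideal "rel_ideal n (\<lambda>_ _. 0) :: bit mpoly set" "poly_ring n" by (rule ideal_rel)
  define s where "s = (\<lambda>m. Poly_Mapping.single m (Poly_Mapping.lookup p m) :: bit mpoly)"
  have pe: "p = (\<Sum>m\<in>Poly_Mapping.keys p. s m)" unfolding s_def by (rule pm_decomp)
  have pp: "p * p = (\<Sum>m\<in>Poly_Mapping.keys p. s m * s m)"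
    by (subst (1 2) pe) (rule bit_sq_sum, simp)
  have each: "s m * s m \<in> rel_ideal n (\<lambda>_ _. 0)" if m: "m \<in> Poly_Mapping.keys p" for m
  proof -
    obtain k where k: "m = mon k" using tdeg1 h m unfolding homog2_iff by blast
    have kn: "k \<in> {1..n}" using p m k by (auto simp: carrier_pr PC_def)
    define c where "c = Poly_Mapping.lookup p m"
    have mm: "mon k + mon k = Poly_Mapping.single k (2::nat)" by (metis one_add_one single_add)
    have sm: "s m = Poly_Mapping.single (mon k) c" by (simp add: s_def c_def k)
    have "s m * s m = Poly_Mapping.single (mon k + mon k) (c * c)" by (simp only: sm mult_single)
    also have "\<dots> = Poly_Mapping.single 0 (c * c) * Poly_Mapping.single (Poly_Mapping.single k 2) 1"
      by (simp only: mm mult_single add_0 mult_1_right)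
    also have "\<dots> = Poly_Mapping.single 0 (c * c) * gen (\<lambda>_ _. 0) k"
      by (simp only: gen_def alpha_zero var_sq mult_zero_left diff_zero)
    finally have "s m * s m = Poly_Mapping.single 0 (c * c) * gen (\<lambda>_ _. 0) k" .
    moreover have "Poly_Mapping.single 0 (c * c) \<in> carrier (poly_ring n)"
      by (simp add: carrier_pr PC_def)
    moreover have "gen (\<lambda>_ _. 0) k \<in> (rel_ideal n (\<lambda>_ _. 0) :: bit mpoly set)" by (rule gen_in_rel[OF kn])
    ultimately show ?thesis using I_l_closed[of "gen (\<lambda>_ _. 0) k" "Poly_Mapping.single 0 (c * c)"] by (simp only: pr_simps)
  qed
  have "(\<Sum>m\<in>F. s m * s m) \<in> rel_ideal n (\<lambda>_ _. 0)" if "F \<subseteq> Poly_Mapping.keys p" for F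
  proof -
    have "finite F" using that finite_keys by (rule finite_subset)
    thus ?thesis using that
    proof (induction F rule: finite_induct)
      case empty
      show ?case using additive_subgroup.zero_closed[OF is_additive_subgroup] by simp
    next
      case (insert a F)
      have "s a * s a \<in> rel_ideal n (\<lambda>_ _. 0)" using each insert(4) by blast
      moreover have "(\<Sum>m\<in>F. s m * s m) \<in> rel_ideal n (\<lambda>_ _. 0)" using insert(3,4) by blast
      ultimately have "s a * s a + (\<Sum>m\<in>F. s m * s m) \<in> rel_ideal n (\<lambda>_ _. 0)"
        using additive_subgroup.a_closed[OF is_additive_subgroup, of "s a * s a" "sum (\<lambda>m. s m * s m) F"] by (simp only: pr_simps)
      thus ?case by (subst sum.insert[OF insert(1,2)])
    qed
  qed
  from this[OF subset_refl] show ?thesis unfolding pp .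
qed

lemma dir31:
  assumes E: "\<forall>i\<in>{1..n}. \<forall>j\<in>{1..n}. even (A i j)"
  shows "Z2_trivial n A"
proof -
  have a0: "(alpha A j :: bit mpoly) = alpha (\<lambda>_ _. 0) j" if j: "j \<in> {1..n}" for j
  proof -
    have "(alpha A j :: bit mpoly) = (\<Sum>i\<in>{1..<j}. Poly_Mapping.single (mon i) 0)"
      unfolding alpha_eq
    proof (rule sum.cong[OF refl])
      fix i assume "i \<in> {1..<j}"
      hence "even (A i j)" using E j by auto
      thus "Poly_Mapping.single (mon i) (of_int (A i j)) = Poly_Mapping.single (mon i) (0::bit)"
        using even_of_int_bit by metis
    qed
    thus ?thesis by (simp add: alpha_zero)
  qed
  have "{var j ^ 2 - alpha A j * var j | j. j \<in> {1..n}} = {var j ^ 2 - alpha (\<lambda>_ _. 0) j * (var j :: bit mpoly) | j. j \<in> {1..n}}"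
    (is "?L = ?R")
  proof -
    have "?L = (\<lambda>j. var j ^ 2 - alpha A j * var j) ` {1..n}" by blast
    also have "\<dots> = (\<lambda>j. var j ^ 2 - alpha (\<lambda>_ _. 0) j * var j) ` {1..n}"
      by (rule image_cong[OF refl]) (simp add: a0)
    also have "\<dots> = ?R" by blast
    finally show ?thesis .
  qed
  hence r: "(rel_ideal n A :: bit mpoly set) = rel_ideal n (\<lambda>_ _. 0)" by (simp add: rel_ideal_def)
  have c: "(coh n A :: bit mpoly set ring) = coh n (\<lambda>_ _. 0)" by (simp add: coh_def r)
  have d: "(cohdeg n A d :: bit mpoly set set) = cohdeg n (\<lambda>_ _. 0) d" for d
    by (simp add: cohdeg_def cls_def r)
  have "graded_ring_iso_coh n A (\<lambda>_ _. 0) (id :: bit mpoly set \<Rightarrow> bit mpoly set)"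
    unfolding graded_ring_iso_coh_def c d using ring_iso_set_refl by simp
  thus ?thesis unfolding Z2_trivial_def by blast
qed

lemma dir13:
  assumes su: "strict_upper n A" and Z: "Z2_trivial n A"
  shows "\<forall>i\<in>{1..n}. \<forall>j\<in>{1..n}. even (A i j)"
proof (intro ballI)
  fix i j assume i: "i \<in> {1..n}" and j: "j \<in> {1..n}"
  show "even (A i j)"
  proof (cases "j \<le> i")
    case True thus ?thesis using su i j by (simp add: strict_upper_def)
  next
    case False
    hence ij: "1 \<le> i" "i < j" using i by auto
    obtain \<phi> :: "bit mpoly set \<Rightarrow> bit mpoly set" where
      iso: "\<phi> \<in> ring_iso (coh n A) (coh n (\<lambda>_ _. 0))" and gr: "\<And>d. \<phi> ` cohdeg n A d = cohdeg n (\<lambda>_ _. 0) d"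
      using Z unfolding Z2_trivial_def graded_ring_iso_coh_def by blast
    have hom: "\<phi> \<in> ring_hom (coh n A) (coh n (\<lambda>_ _. 0))" and bij: "bij_betw \<phi> (carrier (coh n A)) (carrier (coh n (\<lambda>_ _. 0)))"
      using iso by (auto simp: ring_iso_def)
    have vc: "(var j :: bit mpoly) \<in> carrier (poly_ring n)" using j var_PC by (simp add: carrier_pr)
    have vh: "homog 2 (var j :: bit mpoly)" by (simp add: homog_def var_def)
    define x where "x = cls n A (var j :: bit mpoly)"
    have xd: "x \<in> cohdeg n A 2" using vc vh by (auto simp: x_def cohdeg_def)
    have xc: "x \<in> carrier (coh n A)" unfolding x_def by (rule coh_facts(5)[OF vc vc])
    have "\<phi> x \<in> cohdeg n (\<lambda>_ _. 0) 2" using xd gr[of 2] by blast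
    then obtain p :: "bit mpoly" where p: "p \<in> carrier (poly_ring n)" "homog 2 p" "\<phi> x = cls n (\<lambda>_ _. 0) p"
      by (auto simp: cohdeg_def)
    have "\<phi> x \<otimes>\<^bsub>coh n (\<lambda>_ _. 0)\<^esub> \<phi> x = cls n (\<lambda>_ _. 0) (p * p)" using coh_facts(2)[OF p(1) p(1)] p(3) by simp
    also have "\<dots> = \<zero>\<^bsub>coh n (\<lambda>_ _. 0)\<^esub>"
      using coh_facts(4)[of "p * p" n "p * p" "\<lambda>_ _. 0"] sq_in_rel0[OF p(1,2)] p(1)
      by (metis PC_mult carrier_pr)
    finally have "\<phi> (x \<otimes>\<^bsub>coh n A\<^esub> x) = \<phi> \<zero>\<^bsub>coh n A\<^esub>"
      using ring_hom_mult[OF hom xc xc] ring_hom_zero[OF hom ring_coh ring_coh] by simp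
    moreover have "x \<otimes>\<^bsub>coh n A\<^esub> x \<in> carrier (coh n A)" "\<zero>\<^bsub>coh n A\<^esub> \<in> carrier (coh n A)"
      using xc by (simp_all add: ring.ring_simprules[OF ring_coh])
    ultimately have "x \<otimes>\<^bsub>coh n A\<^esub> x = \<zero>\<^bsub>coh n A\<^esub>"
      using bij unfolding bij_betw_def inj_on_def by blast
    moreover have "x \<otimes>\<^bsub>coh n A\<^esub> x = cls n A (var j * var j)" unfolding x_def by (rule coh_facts(2)[OF vc vc])
    ultimately have "cls n A (var j * var j :: bit mpoly) = \<zero>\<^bsub>coh n A\<^esub>" by simp
    moreover have "(var j * var j :: bit mpoly) \<in> carrier (poly_ring n)" using vc by (metis PC_mult carrier_pr)
    ultimately have vi: "(var j * var j :: bit mpoly) \<in> rel_ideal n A" using coh_facts(4) by metis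
    have "Poly_Mapping.lookup (var j * var j :: bit mpoly) (mon i + mon j) + of_int (A i j) * Poly_Mapping.lookup (var j * var j :: bit mpoly) (Poly_Mapping.single j 2) = 0"
      by (rule kill_mix[OF vi ij])
    moreover have "var j * var j = (var j ^ 2 :: bit mpoly)" by (simp add: power2_eq_square)
    moreover have "mon i + mon j \<noteq> Poly_Mapping.single j 2" using mon2_ne_sq ij by auto
    ultimately have "(of_int (A i j) :: bit) = 0" by (simp add: var_sq lookup_single when_def)
    thus ?thesis using even_of_int_bit by blast
  qed
qed

theorem lemma6p4:
  fixes n :: nat and A :: "nat \<Rightarrow> nat \<Rightarrow> int"
  assumes "strict_upper n A"
  shows "(Z2_trivial n A
           \<longleftrightarrow> (\<forall>j\<in>{1..n}. \<exists>y \<in> cohdeg n A 2.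
                 cls n A (alpha A j :: int mpoly) = y \<oplus>\<^bsub>coh n A\<^esub> y))
       \<and> ((\<forall>j\<in>{1..n}. \<exists>y \<in> cohdeg n A 2.
                 cls n A (alpha A j :: int mpoly) = y \<oplus>\<^bsub>coh n A\<^esub> y)
           \<longleftrightarrow> (\<forall>i\<in>{1..n}. \<forall>j\<in>{1..n}. even (A i j)))"
  using dir23[OF assms] dir13[OF assms] dir31 by blast

end
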